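(* Let $W$ be the affine Weyl group of an irreducible reduced crystallographic root system of rank 2, with simple generators $s_0,s_1,s_2$. Let $H_{r_0},H_{r_1}$ be adjacent parallel hyperplanes ($H_{\alpha,c}$ and $H_{\alpha,c+1}$ for some root $\alpha$, $c\in\mathbb{Z}$) and suppose both the alcove $w\in W$ and the identity alcove lie in the strip between them. If $D_R(w)=\{0,i\}$ with $i\in\{1,2\}$, then $s_0s_i$ does not have order $4$.
   Context: $W$ is generated by the reflections in the lines $H_{\beta,k}=\{v:\langle v,\beta\rangle=k\}$ ($\beta$ a root, $k\in\mathbb{Z}$) in a Euclidean plane; its simple generators $s_0,s_1,s_2$ are the reflections in the walls of the fundamental alcove $A_0$, $s_0$ being the reflection in the wall not through the origin. Elements are identified with alcoves via $w\mapsto wA_0$. $\ell$ is Coxeter length; $D_R(w)=\{j:\ell(ws_j)<\ell(w)\}$. *)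

theory Defs
  imports "HOL-Analysis.Analysis"
begin

type_synonym pt = "real^2"

definition hyp :: "pt \<Rightarrow> real \<Rightarrow> pt set" where
  "hyp \<beta> k = {v. inner v \<beta> = k}"

definition refl :: "pt \<Rightarrow> real \<Rightarrow> pt \<Rightarrow> pt" where
  "refl \<beta> k v = v - ((2 * (inner v \<beta> - k)) / inner \<beta> \<beta>) *\<^sub>R \<beta>"

definition root_system :: "pt set \<Rightarrow> bool" where
  "root_system R \<longleftrightarrow> finite R \<and> 0 \<notin> R \<and> span R = UNIV
     \<and> (\<forall>\<alpha>\<in>R. \<forall>\<beta>\<in>R. refl \<alpha> 0 \<beta> \<in> R)
     \<and> (\<forall>\<alpha>\<in>R. \<forall>\<beta>\<in>R. 2 * inner \<alpha> \<beta> / inner \<alpha> \<alpha> \<in> \<int>)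
     \<and> (\<forall>\<alpha>\<in>R. \<forall>c::real. c *\<^sub>R \<alpha> \<in> R \<longrightarrow> c = 1 \<or> c = -1)"

definition irreducible_rs :: "pt set \<Rightarrow> bool" where
  "irreducible_rs R \<longleftrightarrow> \<not> (\<exists>R1 R2. R1 \<noteq> {} \<and> R2 \<noteq> {} \<and> R1 \<union> R2 = R \<and> R1 \<inter> R2 = {}
      \<and> (\<forall>a\<in>R1. \<forall>b\<in>R2. inner a b = 0))"

definition hyp_union :: "pt set \<Rightarrow> pt set" where
  "hyp_union R = (\<Union>\<beta>\<in>R. \<Union>k::int. hyp \<beta> (of_int k))"

definition alcove :: "pt set \<Rightarrow> pt set \<Rightarrow> bool" where
  "alcove R A \<longleftrightarrow> (\<exists>x. x \<notin> hyp_union R \<and> A = connected_component_set (- hyp_union R) x)"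

inductive_set affW :: "pt set \<Rightarrow> (pt \<Rightarrow> pt) set" for R where
  affW_id: "id \<in> affW R"
| affW_step: "\<beta> \<in> R \<Longrightarrow> w \<in> affW R \<Longrightarrow> refl \<beta> (of_int k) \<circ> w \<in> affW R"

text \<open>H_{beta,k} is a wall of the alcove A: it meets the closure of A in a segment
  (at least two distinct points) -- in the plane this means it supports an edge of A.\<close>
definition is_wall :: "pt set \<Rightarrow> pt set \<Rightarrow> pt \<Rightarrow> int \<Rightarrow> bool" where
  "is_wall R A \<beta> k \<longleftrightarrow> \<beta> \<in> R \<and>
     (\<exists>x y. x \<noteq> y \<and> x \<in> closure A \<inter> hyp \<beta> (of_int k) \<and> y \<in> closure A \<inter> hyp \<beta> (of_int k))"

definition simple_refls :: "pt set \<Rightarrow> pt set \<Rightarrow> (pt \<Rightarrow> pt) set" where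
  "simple_refls R A = {refl \<beta> (of_int k) | \<beta> k. is_wall R A \<beta> k}"

definition coxeter_length :: "('a \<Rightarrow> 'a) set \<Rightarrow> ('a \<Rightarrow> 'a) \<Rightarrow> nat" where
  "coxeter_length S w =
     (LEAST n. \<exists>ws. length ws = n \<and> set ws \<subseteq> S \<and> foldr (\<circ>) ws id = w)"

definition right_descents :: "('a \<Rightarrow> 'a) set \<Rightarrow> ('a \<Rightarrow> 'a) \<Rightarrow> ('a \<Rightarrow> 'a) set" where
  "right_descents S w = {s \<in> S. coxeter_length S (w \<circ> s) < coxeter_length S w}"

end

theory Submission
  imports Defs
begin

definition fl :: "pt \<Rightarrow> real \<Rightarrow> pt \<Rightarrow> real" where "fl b k x = inner x b - k"
definition par :: "pt \<times> real \<Rightarrow> pt \<times> real \<Rightarrow> bool" where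
  "par P Q \<longleftrightarrow> (\<exists>l. l \<noteq> 0 \<and> fst Q = l *\<^sub>R fst P \<and> snd Q = l * snd P)"
definition img :: "(pt \<Rightarrow> pt) \<Rightarrow> pt \<times> real \<Rightarrow> pt \<times> real" where
  "img g P = (g (fst P) - g 0, snd P + inner (g 0) (g (fst P) - g 0))"
definition good :: "pt set \<Rightarrow> (pt \<Rightarrow> pt) \<Rightarrow> bool" where
  "good R g \<longleftrightarrow> orthogonal_transformation (\<lambda>x. g x - g 0) \<and>
     (\<forall>b\<in>R. g b - g 0 \<in> R \<and> inner (g 0) (g b - g 0) \<in> \<int>)"

lemma refl_0: "refl b k 0 = (2*k/inner b b) *\<^sub>R b"
  by (simp add: refl_def)

lemma refl_lin: "refl b k x - refl b k 0 = refl b 0 x"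
  by (simp add: refl_def algebra_simps diff_divide_distrib scaleR_diff_left)

lemma refl_orth: assumes "b \<noteq> 0" shows "orthogonal_transformation (refl b 0)"
proof -
  have "linear (refl b 0)"
    by (rule linearI) (simp_all add: refl_def inner_add_left algebra_simps add_divide_distrib)
  moreover have "inner (refl b 0 v) (refl b 0 w) = inner v w" for v w
    using assms by (simp add: refl_def inner_diff_left inner_diff_right field_simps inner_commute)
  ultimately show ?thesis by (simp add: orthogonal_transformation_def)
qed

lemma refl_invol: assumes "b \<noteq> 0" shows "refl b k (refl b k x) = x"
proof -
  define c where "c = 2 * (inner x b - k) / inner b b"
  have bb: "inner b b \<noteq> 0" using assms by simp
  have "inner (x - c *\<^sub>R b) b = inner x b - c * inner b b" by (simp add: inner_diff_left)
  then have "2 * (inner (x - c *\<^sub>R b) b - k) / inner b b = - c"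
    using bb unfolding c_def by (simp add: field_simps)
  then show ?thesis unfolding refl_def c_def[symmetric] by simp
qed

lemma refl_invol': "b \<noteq> 0 \<Longrightarrow> refl b k \<circ> refl b k = id"
  by (rule ext) (simp add: refl_invol)

lemma refl_fix: assumes "b \<noteq> 0" shows "refl b k x = x \<longleftrightarrow> inner x b = k"
  using assms by (simp add: refl_def)

lemma rs_nz: "root_system R \<Longrightarrow> b \<in> R \<Longrightarrow> b \<noteq> 0"
  unfolding root_system_def by auto

lemma good_L: "good R g \<Longrightarrow> orthogonal_transformation (\<lambda>x. g x - g 0)"
  by (simp add: good_def)

lemma good_inner: assumes "good R g" shows "inner (g x - g 0) (g y - g 0) = inner x y"
proof -
  have "orthogonal_transformation (\<lambda>x. g x - g 0)" by (rule good_L[OF assms])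
  then show ?thesis by (simp add: orthogonal_transformation_def)
qed

lemma good_lin: "good R g \<Longrightarrow> linear (\<lambda>x. g x - g 0)"
  using good_L orthogonal_transformation by blast

lemma good_refl:
  assumes R: "root_system R" and b: "b \<in> R" and k: "k \<in> \<int>"
  shows "good R (refl b k)"
proof -
  have bz: "b \<noteq> 0" using rs_nz[OF R b] .
  have L: "(\<lambda>x. refl b k x - refl b k 0) = refl b 0" using refl_lin by auto
  have "refl b 0 c \<in> R \<and> inner (refl b k 0) (refl b 0 c) \<in> \<int>" if c: "c \<in> R" for c
  proof
    show "refl b 0 c \<in> R" using R b c unfolding root_system_def by auto
    have i: "2 * inner b c / inner b b \<in> \<int>" using R b c unfolding root_system_def by auto
    have "inner (refl b k 0) (refl b 0 c) = - k * (2 * inner b c / inner b b)"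
      using bz by (simp add: refl_def inner_diff_right field_simps inner_commute)
    moreover have "- k * (2 * inner b c / inner b b) \<in> \<int>" using i k by (intro Ints_mult Ints_minus)
    ultimately show "inner (refl b k 0) (refl b 0 c) \<in> \<int>" by simp
  qed
  then show ?thesis unfolding good_def L using refl_orth[OF bz] refl_lin by simp
qed

lemma good_id: "good R id"
  by (simp add: good_def orthogonal_transformation_id[unfolded id_def])

lemma good_comp:
  assumes f: "good R f" and g: "good R g" shows "good R (f \<circ> g)"
proof -
  have lf: "linear (\<lambda>x. f x - f 0)" using good_lin[OF f] .
  have e: "f (g x) - f (g 0) = (f (g x - g 0) - f 0)" for x
  proof -
    have "f (g x - g 0) - f 0 = (f (g x) - f 0) - (f (g 0) - f 0)"
      using linear_diff[OF lf, of "g x" "g 0"] by simp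
    then show ?thesis by simp
  qed
  have o: "orthogonal_transformation (\<lambda>x. f (g x) - f (g 0))"
    using orthogonal_transformation_compose[OF good_L[OF f] good_L[OF g]] e by (simp add: o_def)
  have "f (g b) - f (g 0) \<in> R \<and> inner (f (g 0)) (f (g b) - f (g 0)) \<in> \<int>" if b: "b \<in> R" for b
  proof
    have gb: "g b - g 0 \<in> R" using g b by (simp add: good_def)
    then show "f (g b) - f (g 0) \<in> R" using f e by (simp add: good_def)
    have "inner (f (g 0)) (f (g b) - f (g 0)) = inner ((f (g 0) - f 0) + f 0) (f (g b - g 0) - f 0)"
      using e by simp
    also have "\<dots> = inner (f (g 0) - f 0) (f (g b - g 0) - f 0) + inner (f 0) (f (g b - g 0) - f 0)"
      by (rule inner_add_left)
    also have "\<dots> = inner (g 0) (g b - g 0) + inner (f 0) (f (g b - g 0) - f 0)"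
      using good_inner[OF f] by simp
    finally show "inner (f (g 0)) (f (g b) - f (g 0)) \<in> \<int>"
      using g b gb f by (simp add: good_def)
  qed
  then show ?thesis using o by (simp add: good_def)
qed

lemma fl_img:
  assumes g: "good R g"
  shows "fl (fst (img g P)) (snd (img g P)) (g x) = fl (fst P) (snd P) x"
proof -
  have "inner (g x) (g (fst P) - g 0) - inner (g 0) (g (fst P) - g 0) = inner (g x - g 0) (g (fst P) - g 0)"
    by (simp add: inner_diff_left)
  also have "\<dots> = inner x (fst P)" using good_inner[OF g] .
  finally show ?thesis by (simp add: fl_def img_def)
qed

lemma img_comp:
  assumes f: "good R f" and g: "good R g"
  shows "img (f \<circ> g) P = img f (img g P)"
proof -
  have lf: "linear (\<lambda>x. f x - f 0)" using good_lin[OF f] .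
  have e: "f (g x) - f (g 0) = (f (g x - g 0) - f 0)" for x
  proof -
    have "f (g x - g 0) - f 0 = (f (g x) - f 0) - (f (g 0) - f 0)"
      using linear_diff[OF lf, of "g x" "g 0"] by simp
    then show ?thesis by simp
  qed
  have "inner (f (g 0)) (f (g (fst P) - g 0) - f 0) = inner ((f (g 0) - f 0) + f 0) (f (g (fst P) - g 0) - f 0)"
    by simp
  also have "\<dots> = inner (f (g 0) - f 0) (f (g (fst P) - g 0) - f 0) + inner (f 0) (f (g (fst P) - g 0) - f 0)"
    by (rule inner_add_left)
  also have "\<dots> = inner (g 0) (g (fst P) - g 0) + inner (f 0) (f (g (fst P) - g 0) - f 0)"
    using good_inner[OF f] by simp
  finally show ?thesis using e by (simp add: img_def)
qed

lemma conj_refl: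
  assumes g: "good R g" and b: "b \<noteq> 0"
  shows "g \<circ> refl b k = refl (fst (img g (b,k))) (snd (img g (b,k))) \<circ> g"
proof
  fix x
  let ?L = "\<lambda>x. g x - g 0"
  have lin: "linear ?L" using good_lin[OF g] .
  have n: "inner (?L b) (?L b) = inner b b" using good_inner[OF g] .
  define c where "c = 2 * (inner x b - k) / inner b b"
  have "g (refl b k x) = ?L (x - c *\<^sub>R b) + g 0" by (simp add: refl_def c_def)
  also have "\<dots> = g x - c *\<^sub>R ?L b"
  proof -
    have 1: "?L (x - c *\<^sub>R b) = ?L x - ?L (c *\<^sub>R b)" by (rule linear_diff[OF lin])
    have 2: "?L (c *\<^sub>R b) = c *\<^sub>R ?L b" by (rule linear_scale[OF lin])
    show ?thesis using 1 2 by (simp add: algebra_simps)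
  qed
  finally have l: "g (refl b k x) = g x - c *\<^sub>R ?L b" .
  have "inner (g x) (?L b) - (k + inner (g 0) (?L b)) = inner (?L x) (?L b) - k"
    by (simp add: inner_diff_left)
  also have "\<dots> = inner x b - k" using good_inner[OF g] by simp
  finally have "refl (?L b) (k + inner (g 0) (?L b)) (g x) = g x - c *\<^sub>R ?L b"
    unfolding refl_def c_def n by simp
  then show "(g \<circ> refl b k) x = (refl (fst (img g (b,k))) (snd (img g (b,k))) \<circ> g) x"
    using l by (simp add: img_def)
qed

definition arr :: "pt set \<Rightarrow> pt \<times> real \<Rightarrow> bool" where
  "arr R P \<longleftrightarrow> fst P \<in> R \<and> snd P \<in> \<int>"

lemma par_self: "par P P"
  unfolding par_def by (rule exI[of _ 1]) simp

lemma par_sym: assumes "par P Q" shows "par Q P"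
proof -
  obtain l where l: "l \<noteq> 0" "fst Q = l *\<^sub>R fst P" "snd Q = l * snd P" using assms par_def by blast
  then show ?thesis unfolding par_def by (intro exI[of _ "1/l"]) simp
qed

lemma par_trans: assumes "par P Q" "par Q S" shows "par P S"
proof -
  obtain l where l: "l \<noteq> 0" "fst Q = l *\<^sub>R fst P" "snd Q = l * snd P" using assms par_def by blast
  obtain m where m: "m \<noteq> 0" "fst S = m *\<^sub>R fst Q" "snd S = m * snd Q" using assms par_def by blast
  show ?thesis unfolding par_def using l m by (intro exI[of _ "m*l"]) simp
qed

lemma par_fl: assumes "par P Q" shows "\<exists>l. l \<noteq> 0 \<and> (\<forall>x. fl (fst Q) (snd Q) x = l * fl (fst P) (snd P) x)"
proof -
  obtain l where l: "l \<noteq> 0" "fst Q = l *\<^sub>R fst P" "snd Q = l * snd P" using assms par_def by blast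
  show ?thesis using l by (intro exI[of _ l]) (simp add: fl_def right_diff_distrib)
qed

lemma par_fl_prod: assumes "par P Q"
  shows "(fl (fst Q) (snd Q) x * fl (fst Q) (snd Q) y < 0) = (fl (fst P) (snd P) x * fl (fst P) (snd P) y < 0)"
    "(fl (fst Q) (snd Q) x * fl (fst Q) (snd Q) y > 0) = (fl (fst P) (snd P) x * fl (fst P) (snd P) y > 0)"
proof -
  obtain l where l: "l \<noteq> 0" "\<forall>x. fl (fst Q) (snd Q) x = l * fl (fst P) (snd P) x"
    using par_fl[OF assms] by blast
  have e: "fl (fst Q) (snd Q) x * fl (fst Q) (snd Q) y = (l*l) * (fl (fst P) (snd P) x * fl (fst P) (snd P) y)"
    using l by simp
  have p: "l * l > 0" using l(1) by (meson linorder_neq_iff mult_neg_neg mult_pos_pos)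
  show "(fl (fst Q) (snd Q) x * fl (fst Q) (snd Q) y < 0) = (fl (fst P) (snd P) x * fl (fst P) (snd P) y < 0)"
    unfolding e using p by (simp add: mult_less_0_iff)
  show "(fl (fst Q) (snd Q) x * fl (fst Q) (snd Q) y > 0) = (fl (fst P) (snd P) x * fl (fst P) (snd P) y > 0)"
    unfolding e using p by (simp add: zero_less_mult_iff)
qed

lemma par_refl_eq: assumes "par P Q" shows "refl (fst P) (snd P) = refl (fst Q) (snd Q)"
proof
  fix x
  obtain l where l: "l \<noteq> 0" "fst Q = l *\<^sub>R fst P" "snd Q = l * snd P" using assms par_def by blast
  have e: "2 * (inner x (l *\<^sub>R fst P) - l * snd P) / inner (l *\<^sub>R fst P) (l *\<^sub>R fst P) * l
      = 2 * (inner x (fst P) - snd P) / inner (fst P) (fst P)"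
  proof (cases "fst P = 0")
    case True then show ?thesis by simp
  next
    case False then show ?thesis using l(1) by (simp add: field_simps)
  qed
  have "refl (fst Q) (snd Q) x = x - (2 * (inner x (l *\<^sub>R fst P) - l * snd P) / inner (l *\<^sub>R fst P) (l *\<^sub>R fst P) * l) *\<^sub>R fst P"
    unfolding refl_def l(2,3) by (simp only: scaleR_scaleR)
  then show "refl (fst P) (snd P) x = refl (fst Q) (snd Q) x"
    unfolding e by (simp add: refl_def)
qed

lemma img_par: assumes g: "good R g" and p: "par P Q" shows "par (img g P) (img g Q)"
proof -
  obtain l where l: "l \<noteq> 0" "fst Q = l *\<^sub>R fst P" "snd Q = l * snd P" using p par_def by blast
  have lin: "linear (\<lambda>x. g x - g 0)" using good_lin[OF g] .
  have "g (l *\<^sub>R fst P) - g 0 = l *\<^sub>R (g (fst P) - g 0)"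
    using linear_scale[OF lin, of l "fst P"] by simp
  then show ?thesis unfolding par_def img_def using l
    by (intro exI[of _ l]) (simp add: inner_scaleR_right distrib_left)
qed

lemma img_par_rev: assumes g: "good R g" and p: "par (img g P) (img g Q)" shows "par P Q"
proof -
  obtain l where l: "l \<noteq> 0" "fst (img g Q) = l *\<^sub>R fst (img g P)" "snd (img g Q) = l * snd (img g P)"
    using p par_def by blast
  have lin: "linear (\<lambda>x. g x - g 0)" using good_lin[OF g] .
  have "g (fst Q - l *\<^sub>R fst P) - g 0 = (g (fst Q) - g 0) - l *\<^sub>R (g (fst P) - g 0)"
    using linear_scale[OF lin, of l "fst P"] linear_diff[OF lin, of "fst Q" "l *\<^sub>R fst P"] by simp
  also have "\<dots> = 0" using l(2) by (simp add: img_def)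
  finally have "inner (fst Q - l *\<^sub>R fst P) (fst Q - l *\<^sub>R fst P) = 0"
    using good_inner[OF g, of "fst Q - l *\<^sub>R fst P" "fst Q - l *\<^sub>R fst P"] by simp
  then have e: "fst Q = l *\<^sub>R fst P" by simp
  have "snd Q = l * snd P" using l(3) e unfolding img_def
    using linear_scale[OF lin, of l "fst P"] by (simp add: algebra_simps)
  then show ?thesis unfolding par_def using e l(1) by blast
qed

lemma img_refl_self: assumes "b \<noteq> 0" shows "par (img (refl b k) (b,k)) (b,k)"
proof -
  have bb: "inner b b \<noteq> 0" using assms by simp
  have c2: "2 * (inner b b - 0) / inner b b = 2" using bb by simp
  have "refl b 0 b = b - 2 *\<^sub>R b" unfolding refl_def c2 by simp
  also have "\<dots> = -b" by (simp add: scaleR_2)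
  finally have 1: "refl b k b - refl b k 0 = -b" using refl_lin[of b k b] by simp
  have 2: "k + inner (refl b k 0) (-b) = -k" using bb by (simp add: refl_0)
  have "img (refl b k) (b,k) = (-b, -k)"
    unfolding img_def using 1 2 by simp
  then show ?thesis unfolding par_def by (intro exI[of _ "-1"]) simp
qed

lemma good_surj:
  assumes g: "good R g" and f: "finite R" and c: "c \<in> R"
  shows "\<exists>d\<in>R. g d - g 0 = c"
proof -
  let ?L = "\<lambda>x. g x - g 0"
  have "?L ` R \<subseteq> R" using g unfolding good_def by blast
  moreover have "inj_on ?L R"
    using orthogonal_transformation_inj[OF good_L[OF g]] inj_on_subset by blast
  ultimately have "?L ` R = R" using endo_inj_surj[OF f] by blast
  then have "c \<in> ?L ` R" using c by simp
  then show ?thesis by blast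
qed

lemma arr_img: assumes "good R g" "arr R P" shows "arr R (img g P)"
proof -
  have "g (fst P) - g 0 \<in> R" "inner (g 0) (g (fst P) - g 0) \<in> \<int>" "snd P \<in> \<int>"
    using assms unfolding good_def arr_def by blast+
  then show ?thesis unfolding arr_def img_def by simp
qed

lemma img_preimg:
  assumes g: "good R g" and f: "finite R" and P: "arr R P"
  shows "\<exists>Q. arr R Q \<and> img g Q = P"
proof -
  obtain d where d: "d \<in> R" "g d - g 0 = fst P" using good_surj[OF g f] P arr_def by blast
  have "inner (g 0) (g d - g 0) \<in> \<int>" using g d(1) unfolding good_def by blast
  moreover have "snd P \<in> \<int>" using P unfolding arr_def by blast
  ultimately have "snd P - inner (g 0) (fst P) \<in> \<int>" using d(2) by (simp add: Ints_diff)
  then show ?thesis using d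
    by (intro exI[of _ "(d, snd P - inner (g 0) (fst P))"]) (simp add: arr_def img_def)
qed

lemma img_id: "img id P = P" by (simp add: img_def)

lemma inner2: "inner (x::real^2) y = x$1*y$1 + x$2*y$2"
  by (simp add: inner_vec_def sum_2)

lemma vec_eq2: "((x::real^2) = y) \<longleftrightarrow> x$1 = y$1 \<and> x$2 = y$2"
  by (simp add: vec_eq_iff forall_2)

definition rot :: "pt \<Rightarrow> pt" where "rot d = (\<chi> i. if i = 1 then - d$2 else d$1)"

lemma rot1[simp]: "rot d $ 1 = - d$2" and rot2[simp]: "rot d $ 2 = d$1"
  by (simp_all add: rot_def)

definition det2 :: "pt \<Rightarrow> pt \<Rightarrow> real" where "det2 a b = a$1*b$2 - a$2*b$1"

lemma rot_nz: "d \<noteq> 0 \<Longrightarrow> rot d \<noteq> 0"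
  by (simp add: vec_eq2) blast

lemma rot_perp: "inner (rot d) d = 0"
  by (simp add: inner2)

lemma perp2: assumes "(d::pt) \<noteq> 0" "inner b d = 0" shows "\<exists>m. b = m *\<^sub>R rot d"
proof (cases "d$1 = 0")
  case True
  then have "d$2 \<noteq> 0" using assms(1) by (simp add: vec_eq2)
  then show ?thesis using assms True
    by (intro exI[of _ "- b$1 / d$2"]) (auto simp: vec_eq2 inner2 field_simps)
next
  case False
  then show ?thesis using assms
    by (intro exI[of _ "b$2 / d$1"]) (auto simp: vec_eq2 inner2 field_simps)
qed

lemma two_point:
  assumes "z1 \<noteq> z2" "fl b k z1 = 0" "fl b k z2 = 0" "fl c m z1 = 0" "fl c m z2 = 0" "b \<noteq> 0" "c \<noteq> 0"
  shows "par (b,k) (c,m)"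
proof -
  let ?d = "z2 - z1"
  have d: "?d \<noteq> 0" using assms by simp
  have "inner b ?d = 0" "inner c ?d = 0" using assms(2-5)
    by (auto simp: fl_def inner_diff_right inner_commute)
  then obtain mb mc where mb: "b = mb *\<^sub>R rot ?d" and mc: "c = mc *\<^sub>R rot ?d"
    using perp2[OF d] by metis
  have mbz: "mb \<noteq> 0" using mb assms(6) by auto
  have mcz: "mc \<noteq> 0" using mc assms(7) by auto
  have cb: "c = (mc/mb) *\<^sub>R b" using mb mc mbz by simp
  have "m = inner z1 c" "k = inner z1 b" using assms(2,4) by (auto simp: fl_def)
  then have "m = (mc/mb) * k" using cb by simp
  then show ?thesis unfolding par_def using cb mbz mcz by (intro exI[of _ "mc/mb"]) simp
qed

lemma refl_eq_par:
  assumes b: "b \<noteq> 0" and c: "c \<noteq> 0" and e: "refl b k = refl c m"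
  shows "par (b,k) (c,m)"
proof -
  let ?z1 = "(k / inner b b) *\<^sub>R b"
  let ?z2 = "?z1 + rot b"
  have h1: "inner ?z1 b = k" using b by simp
  have h2: "inner ?z2 b = k" using b by (simp add: inner_add_left rot_perp)
  have "refl c m ?z1 = ?z1" "refl c m ?z2 = ?z2"
    using refl_fix[OF b] h1 h2 e by metis+
  then have "inner ?z1 c = m" "inner ?z2 c = m" using refl_fix[OF c] by blast+
  moreover have "?z1 \<noteq> ?z2" using rot_nz[OF b] by simp
  ultimately show ?thesis using two_point[of ?z1 ?z2 b k c m] h1 h2 b c by (simp add: fl_def)
qed

lemma decomp2: assumes "det2 a b \<noteq> 0"
  shows "x = (det2 x b / det2 a b) *\<^sub>R a + (det2 a x / det2 a b) *\<^sub>R b"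
proof -
  have 1: "det2 x b * a$1 + det2 a x * b$1 = x$1 * det2 a b" by (simp add: det2_def algebra_simps)
  have 2: "det2 x b * a$2 + det2 a x * b$2 = x$2 * det2 a b" by (simp add: det2_def algebra_simps)
  have "(det2 x b / det2 a b) * a$1 + (det2 a x / det2 a b) * b$1 = x$1"
    using assms 1 by (simp add: field_simps)
  moreover have "(det2 x b / det2 a b) * a$2 + (det2 a x / det2 a b) * b$2 = x$2"
    using assms 2 by (simp add: field_simps)
  ultimately show ?thesis by (simp add: vec_eq2)
qed

lemma perp0: assumes "det2 a b \<noteq> 0" "inner v a = 0" "inner v b = 0" shows "v = 0"
proof -
  have "v$1 * a$1 + v$2 * a$2 = 0" "v$1 * b$1 + v$2 * b$2 = 0" using assms(2,3) by (simp_all add: inner2)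
  then have "v$1 * det2 a b = 0" "v$2 * det2 a b = 0" unfolding det2_def by algebra+
  then show ?thesis using assms(1) by (simp add: vec_eq2)
qed

lemma lagrange2: "inner a a * inner b b - (inner a b)^2 = (det2 a b)^2"
  by (simp add: inner2 det2_def power2_eq_square algebra_simps)

lemma det0_par: assumes "det2 a b = 0" "a \<noteq> 0" shows "\<exists>l. b = l *\<^sub>R a"
proof (cases "a$1 = 0")
  case True
  then have "a$2 \<noteq> 0" using assms(2) by (simp add: vec_eq2)
  then show ?thesis using assms True
    by (intro exI[of _ "b$2 / a$2"]) (auto simp: vec_eq2 det2_def field_simps)
next
  case False
  then show ?thesis using assms
    by (intro exI[of _ "b$1 / a$1"]) (auto simp: vec_eq2 det2_def field_simps)
qed


section \<open>Alcoves\<close>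

lemma sq_pos: "(x::real) \<noteq> 0 \<Longrightarrow> x * x > 0"
  by (cases "x > 0") (auto simp: mult_neg_neg)

lemma sgn3: "(u::real) * v > 0 \<Longrightarrow> u * w > 0 \<Longrightarrow> v * w > 0"
  by (auto simp: zero_less_mult_iff)

lemma alc_sub: "alcove R A0 \<Longrightarrow> A0 \<subseteq> - hyp_union R"
  unfolding alcove_def using connected_component_subset by blast

lemma hyp_union_mem: assumes "arr R P" "fl (fst P) (snd P) x = 0" shows "x \<in> hyp_union R"
proof -
  obtain k :: int where k: "snd P = of_int k" using assms(1) arr_def Ints_cases by metis
  have "x \<in> hyp (fst P) (of_int k)" using assms(2) k by (simp add: hyp_def fl_def)
  then show ?thesis using assms(1) unfolding hyp_union_def arr_def by blast
qed

lemma alc_nz: assumes "alcove R A0" "x \<in> A0" "arr R P" shows "fl (fst P) (snd P) x \<noteq> 0"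
  using hyp_union_mem[OF assms(3)] alc_sub[OF assms(1)] assms(2) by blast

lemma alc_conn: "alcove R A0 \<Longrightarrow> connected A0"
  unfolding alcove_def using connected_connected_component by blast

lemma alc_sign: assumes A: "alcove R A0" and x: "x \<in> A0" and y: "y \<in> A0" and P: "arr R P"
  shows "fl (fst P) (snd P) x * fl (fst P) (snd P) y > 0"
proof (rule ccontr)
  let ?f = "fl (fst P) (snd P)"
  assume "\<not> ?thesis"
  moreover have "?f x \<noteq> 0" "?f y \<noteq> 0" using alc_nz[OF A _ P] x y by auto
  ultimately have "(?f x < 0 \<and> ?f y > 0) \<or> (?f y < 0 \<and> ?f x > 0)"
    by (auto simp: zero_less_mult_iff linorder_neq_iff)
  then obtain u v where uv: "u \<in> A0" "v \<in> A0" "?f u \<le> 0" "?f v \<ge> 0" using x y by (meson less_imp_le)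
  have "inner (fst P) u \<le> snd P" "snd P \<le> inner (fst P) v"
    using uv by (auto simp: fl_def inner_commute)
  then obtain z where "z \<in> A0" "inner (fst P) z = snd P"
    using connected_ivt_hyperplane[OF alc_conn[OF A] uv(1,2)] by blast
  then show False using alc_nz[OF A _ P] by (simp add: fl_def inner_commute)
qed

lemma fl_comb: "fl b k ((1 - t) *\<^sub>R y + t *\<^sub>R z) = (1 - t) * fl b k y + t * fl b k z"
  by (simp add: fl_def inner_add_left algebra_simps)

lemma alc_convex: assumes A: "alcove R A0" shows "convex A0"
  unfolding convex_contains_segment
proof (intro ballI)
  fix y z assume y: "y \<in> A0" and z: "z \<in> A0"
  obtain x0 where x0: "A0 = connected_component_set (- hyp_union R) x0" using A alcove_def by blast
  have seg: "closed_segment y z \<subseteq> - hyp_union R"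
  proof
    fix u assume u: "u \<in> closed_segment y z"
    then obtain t where t: "0 \<le> t" "t \<le> 1" "u = (1 - t) *\<^sub>R y + t *\<^sub>R z"
      unfolding closed_segment_def by blast
    show "u \<in> - hyp_union R"
    proof
      assume "u \<in> hyp_union R"
      then obtain b and k :: int where bk: "b \<in> R" "u \<in> hyp b (of_int k)"
        unfolding hyp_union_def by blast
      have P: "arr R (b, of_int k)" using bk(1) by (simp add: arr_def)
      have fu: "fl b (of_int k) u = 0" using bk(2) by (simp add: hyp_def fl_def)
      have pos: "fl b (of_int k) y * fl b (of_int k) z > 0" using alc_sign[OF A y z P] by simp
      have "fl b (of_int k) u = (1 - t) * fl b (of_int k) y + t * fl b (of_int k) z"
        using t(3) fl_comb by simp
      moreover have "(1 - t) * fl b (of_int k) y + t * fl b (of_int k) z \<noteq> 0"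
      proof (cases "fl b (of_int k) y > 0")
        case True
        then have "fl b (of_int k) z > 0" using pos by (simp add: zero_less_mult_iff)
        then show ?thesis using True t(1,2)
          by (smt (verit) mult_nonneg_nonneg mult_pos_pos)
      next
        case False
        then have "fl b (of_int k) y < 0" "fl b (of_int k) z < 0" using pos by (auto simp: zero_less_mult_iff)
        then show ?thesis using t(1,2)
          by (smt (verit) mult_nonneg_nonpos mult_pos_neg)
      qed
      ultimately show False using fu by simp
    qed
  qed
  have "y \<in> connected_component_set (- hyp_union R) x0" using y x0 by simp
  then have cy: "connected_component_set (- hyp_union R) y = A0" using x0 connected_component_eq by blast
  have "closed_segment y z \<subseteq> connected_component_set (- hyp_union R) y"
    by (rule connected_component_maximal) (use seg in auto)
  then show "closed_segment y z \<subseteq> A0" using cy by simp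
qed

lemma alc_closure_sign: assumes A: "alcove R A0" and x: "x \<in> A0" and P: "arr R P" and z: "z \<in> closure A0"
  shows "fl (fst P) (snd P) z * fl (fst P) (snd P) x \<ge> 0"
proof -
  let ?f = "fl (fst P) (snd P)"
  let ?S = "{v. inner (?f x *\<^sub>R fst P) v \<ge> snd P * ?f x}"
  have e: "?f v * ?f x = inner (?f x *\<^sub>R fst P) v - snd P * ?f x" for v
    by (simp add: fl_def algebra_simps inner_commute)
  have "A0 \<subseteq> ?S"
  proof
    fix v assume "v \<in> A0"
    then have "?f v * ?f x > 0" using alc_sign[OF A _ x P] by blast
    then show "v \<in> ?S" using e[of v] by simp
  qed
  moreover have "closed ?S" by (rule closed_halfspace_ge)
  ultimately have "closure A0 \<subseteq> ?S" by (rule closure_minimal)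
  then show ?thesis using z e[of z] by auto
qed

lemma wall_point:
  assumes R: "root_system R" and A: "alcove R A0" and W: "is_wall R A0 b k"
  shows "\<exists>z\<in>closure A0. fl b (of_int k) z = 0 \<and>
     (\<forall>P. arr R P \<and> \<not> par (b, of_int k) P \<longrightarrow> fl (fst P) (snd P) z \<noteq> 0)"
proof -
  obtain x y where xy: "x \<noteq> y" "x \<in> closure A0 \<inter> hyp b (of_int k)" "y \<in> closure A0 \<inter> hyp b (of_int k)"
    using W is_wall_def by blast
  have b: "b \<in> R" using W is_wall_def by blast
  have bz: "b \<noteq> 0" using rs_nz[OF R b] .
  have cc: "convex (closure A0)" using alc_convex[OF A] by simp
  have seg1: "closed_segment x y \<subseteq> closure A0" using cc xy convex_contains_segment by blast
  have seg2: "fl b (of_int k) u = 0" if u: "u \<in> closed_segment x y" for u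
  proof -
    obtain t where t: "u = (1 - t) *\<^sub>R x + t *\<^sub>R y" using u unfolding closed_segment_def by blast
    have "fl b (of_int k) x = 0" "fl b (of_int k) y = 0" using xy by (auto simp: hyp_def fl_def)
    then show ?thesis using t fl_comb by simp
  qed
  define Bad where "Bad = (\<Union>P\<in>{P. arr R P \<and> \<not> par (b, of_int k) P}. {u \<in> closed_segment x y. fl (fst P) (snd P) u = 0})"
  have cI: "countable {P. arr R P \<and> \<not> par (b, of_int k) P}"
  proof -
    have "{P. arr R P \<and> \<not> par (b, of_int k) P} \<subseteq> R \<times> \<int>" by (auto simp: arr_def)
    moreover have "countable (R \<times> \<int>)"
      using R countable_int unfolding root_system_def by (intro countable_SIGMA) (auto intro: countable_finite)
    ultimately show ?thesis using countable_subset by blast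
  qed
  have cB: "countable Bad" unfolding Bad_def
  proof (rule countable_UN[OF cI])
    fix P assume P: "P \<in> {P. arr R P \<and> \<not> par (b, of_int k) P}"
    have "\<exists>z. {u \<in> closed_segment x y. fl (fst P) (snd P) u = 0} \<subseteq> {z}"
    proof (rule ccontr)
      assume "\<not> ?thesis"
      then obtain u v where uv: "u \<noteq> v" "u \<in> closed_segment x y" "v \<in> closed_segment x y"
        "fl (fst P) (snd P) u = 0" "fl (fst P) (snd P) v = 0" by blast
      have pz: "fst P \<noteq> 0" using P rs_nz[OF R] by (auto simp: arr_def)
      have "par (b, of_int k) (fst P, snd P)"
        using two_point[OF uv(1) seg2[OF uv(2)] seg2[OF uv(3)] uv(4,5) bz pz] .
      then show False using P by simp
    qed
    then obtain z0 where "{u \<in> closed_segment x y. fl (fst P) (snd P) u = 0} \<subseteq> {z0}" by blast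
    then have "finite {u \<in> closed_segment x y. fl (fst P) (snd P) u = 0}" by (rule finite_subset) simp
    then show "countable {u \<in> closed_segment x y. fl (fst P) (snd P) u = 0}" by (rule countable_finite)
  qed
  have "\<not> closed_segment x y \<subseteq> Bad"
    using uncountable_closed_segment[OF xy(1)] cB countable_subset by blast
  then obtain z where z: "z \<in> closed_segment x y" "z \<notin> Bad" by blast
  show ?thesis
  proof (intro bexI conjI allI impI)
    show "z \<in> closure A0" using z seg1 by blast
    show "fl b (of_int k) z = 0" using seg2 z by blast
    fix P assume "arr R P \<and> \<not> par (b, of_int k) P"
    then show "fl (fst P) (snd P) z \<noteq> 0" using z unfolding Bad_def by blast
  qed
qed

lemma fl_refl_self: assumes "b \<noteq> 0" shows "fl b k (refl b k x) = - fl b k x"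
proof -
  have bb: "inner b b \<noteq> 0" using assms by simp
  have "inner (refl b k x) b = inner x b - 2 * (inner x b - k)"
    using bb by (simp add: refl_def inner_diff_left)
  then show ?thesis by (simp add: fl_def)
qed

lemma wall_flip:
  assumes R: "root_system R" and A: "alcove R A0" and W: "is_wall R A0 b k"
    and a0: "a0 \<in> A0" and P: "arr R P"
  shows "par (b, of_int k) P \<Longrightarrow> fl (fst P) (snd P) (refl b (of_int k) a0) * fl (fst P) (snd P) a0 < 0"
    and "\<not> par (b, of_int k) P \<Longrightarrow> fl (fst P) (snd P) (refl b (of_int k) a0) * fl (fst P) (snd P) a0 > 0"
proof -
  have b: "b \<in> R" using W is_wall_def by blast
  have bz: "b \<noteq> 0" using rs_nz[OF R b] .
  let ?s = "refl b (of_int k)"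
  have bP: "arr R (b, of_int k)" using b by (simp add: arr_def)
  have g: "good R ?s" using good_refl[OF R b] by simp
  {
    assume p: "par (b, of_int k) P"
    have f0: "fl b (of_int k) a0 \<noteq> 0" using alc_nz[OF A a0 bP] by simp
    have sq: "fl b (of_int k) a0 * fl b (of_int k) a0 > 0" using f0 by (rule sq_pos)
    have "fl b (of_int k) (?s a0) * fl b (of_int k) a0 < 0"
      using fl_refl_self[OF bz, of "of_int k" a0] sq by simp
    then show "fl (fst P) (snd P) (?s a0) * fl (fst P) (snd P) a0 < 0"
      using par_fl_prod(1)[OF p] by simp
  }
  {
    assume np: "\<not> par (b, of_int k) P"
    obtain z where z: "z \<in> closure A0" "fl b (of_int k) z = 0"
      "\<forall>P. arr R P \<and> \<not> par (b, of_int k) P \<longrightarrow> fl (fst P) (snd P) z \<noteq> 0"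
      using wall_point[OF R A W] by blast
    define Q where "Q = img ?s P"
    have Q: "arr R Q" using arr_img[OF g P] Q_def by simp
    have ss: "?s \<circ> ?s = id" using refl_invol'[OF bz] .
    have "img ?s Q = img (?s \<circ> ?s) P" unfolding Q_def by (rule img_comp[OF g g, symmetric])
    then have QP: "img ?s Q = P" unfolding ss img_id .
    have nQ: "\<not> par (b, of_int k) Q"
    proof
      assume "par (b, of_int k) Q"
      then have "par (img ?s (b, of_int k)) (img ?s Q)" by (rule img_par[OF g])
      then have "par (img ?s (b, of_int k)) P" unfolding QP .
      then have "par (b, of_int k) P" by (rule par_trans[OF par_sym[OF img_refl_self[OF bz]]])
      then show False using np by simp
    qed
    have sz: "?s z = z" using refl_fix[OF bz] z(2) by (simp add: fl_def)
    have e1: "fl (fst P) (snd P) (?s x) = fl (fst Q) (snd Q) x" for x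
      using fl_img[OF g, of Q x] QP by simp
    have zQ: "fl (fst Q) (snd Q) z \<noteq> 0" using z(3) Q nQ by blast
    have zP: "fl (fst P) (snd P) z \<noteq> 0" using z(3) P np by blast
    have "fl (fst Q) (snd Q) z * fl (fst Q) (snd Q) a0 \<ge> 0" using alc_closure_sign[OF A a0 Q z(1)] .
    moreover have "fl (fst Q) (snd Q) a0 \<noteq> 0" using alc_nz[OF A a0 Q] .
    ultimately have 1: "fl (fst Q) (snd Q) z * fl (fst Q) (snd Q) a0 > 0" using zQ
      by (simp add: less_le)
    have "fl (fst P) (snd P) z * fl (fst P) (snd P) a0 \<ge> 0" using alc_closure_sign[OF A a0 P z(1)] .
    moreover have "fl (fst P) (snd P) a0 \<noteq> 0" using alc_nz[OF A a0 P] .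
    ultimately have 2: "fl (fst P) (snd P) z * fl (fst P) (snd P) a0 > 0" using zP
      by (simp add: less_le)
    have zz: "fl (fst Q) (snd Q) z = fl (fst P) (snd P) z" using e1[of z] sz by simp
    have "fl (fst Q) (snd Q) a0 * fl (fst P) (snd P) a0 > 0" using sgn3[OF 1 2[folded zz]] .
    then show "fl (fst P) (snd P) (?s a0) * fl (fst P) (snd P) a0 > 0" using e1 by simp
  }
qed


section \<open>Words\<close>

definition fw :: "(pt \<Rightarrow> pt) list \<Rightarrow> pt \<Rightarrow> pt" where "fw ws = foldr (\<circ>) ws id"

lemma fw_Nil[simp]: "fw [] = id" by (simp add: fw_def)
lemma fw_Cons[simp]: "fw (s # ws) = s \<circ> fw ws" by (simp add: fw_def)
lemma fw_append[simp]: "fw (xs @ ys) = fw xs \<circ> fw ys"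
  by (induction xs) (simp_all add: o_assoc)

definition wall_of :: "pt set \<Rightarrow> pt set \<Rightarrow> (pt \<Rightarrow> pt) \<Rightarrow> pt \<times> real" where
  "wall_of R A0 s = (SOME P. \<exists>b k. is_wall R A0 b k \<and> P = (b, of_int k) \<and> s = refl b (of_int k))"

lemma wall_of:
  assumes "s \<in> simple_refls R A0"
  shows "\<exists>b k. is_wall R A0 b k \<and> wall_of R A0 s = (b, of_int k) \<and> s = refl b (of_int k)"
proof -
  have "\<exists>P b k. is_wall R A0 b k \<and> P = (b, of_int k) \<and> s = refl b (of_int k)"
    using assms unfolding simple_refls_def by blast
  then show ?thesis unfolding wall_of_def by (rule someI_ex)
qed

lemma wall_of_refl: "s \<in> simple_refls R A0 \<Longrightarrow> refl (fst (wall_of R A0 s)) (snd (wall_of R A0 s)) = s"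
  using wall_of by fastforce

lemma wall_of_arr: "s \<in> simple_refls R A0 \<Longrightarrow> arr R (wall_of R A0 s)"
  using wall_of unfolding is_wall_def arr_def by fastforce

lemma simple_good: assumes R: "root_system R" and s: "s \<in> simple_refls R A0" shows "good R s"
proof -
  obtain b k where "is_wall R A0 b k" "s = refl b (of_int k)" using s simple_refls_def by blast
  then show ?thesis using good_refl[OF R] is_wall_def by auto
qed

lemma fw_good: assumes R: "root_system R" shows "set ws \<subseteq> simple_refls R A0 \<Longrightarrow> good R (fw ws)"
  by (induction ws) (auto simp: good_id good_comp simple_good[OF R])

definition cr :: "pt set \<Rightarrow> pt set \<Rightarrow> (pt \<Rightarrow> pt) list \<Rightarrow> (pt \<Rightarrow> pt) \<Rightarrow> pt \<times> real" where
  "cr R A0 xs s = img (fw xs) (wall_of R A0 s)"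

lemma step_sign:
  assumes R: "root_system R" and A: "alcove R A0" and a0: "a0 \<in> A0"
    and xs: "set xs \<subseteq> simple_refls R A0" and s: "s \<in> simple_refls R A0" and P: "arr R P"
  shows "par (cr R A0 xs s) P \<Longrightarrow> fl (fst P) (snd P) (fw (xs @ [s]) a0) * fl (fst P) (snd P) (fw xs a0) < 0"
    and "\<not> par (cr R A0 xs s) P \<Longrightarrow> fl (fst P) (snd P) (fw (xs @ [s]) a0) * fl (fst P) (snd P) (fw xs a0) > 0"
proof -
  let ?g = "fw xs"
  have g: "good R ?g" using fw_good[OF R xs] .
  have fin: "finite R" using R root_system_def by blast
  obtain Q where Q: "arr R Q" "img ?g Q = P" using img_preimg[OF g fin P] by blast
  obtain b k where bk: "is_wall R A0 b k" "wall_of R A0 s = (b, of_int k)" "s = refl b (of_int k)"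
    using wall_of[OF s] by blast
  have e: "fl (fst P) (snd P) (?g x) = fl (fst Q) (snd Q) x" for x
    using fl_img[OF g, of Q x] Q(2) by simp
  have pp: "par (cr R A0 xs s) P \<longleftrightarrow> par (b, of_int k) Q"
  proof
    assume "par (cr R A0 xs s) P"
    then have "par (img ?g (b, of_int k)) (img ?g Q)" using Q(2) bk(2) by (simp add: cr_def)
    then show "par (b, of_int k) Q" by (rule img_par_rev[OF g])
  next
    assume "par (b, of_int k) Q"
    then have "par (img ?g (b, of_int k)) (img ?g Q)" by (rule img_par[OF g])
    then show "par (cr R A0 xs s) P" using Q(2) bk(2) by (simp add: cr_def)
  qed
  have fe: "fw (xs @ [s]) a0 = ?g (refl b (of_int k) a0)" using bk(3) by simp
  show "par (cr R A0 xs s) P \<Longrightarrow> fl (fst P) (snd P) (fw (xs @ [s]) a0) * fl (fst P) (snd P) (fw xs a0) < 0"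
    unfolding fe e pp using wall_flip(1)[OF R A bk(1) a0 Q(1)] by simp
  show "\<not> par (cr R A0 xs s) P \<Longrightarrow> fl (fst P) (snd P) (fw (xs @ [s]) a0) * fl (fst P) (snd P) (fw xs a0) > 0"
    unfolding fe e pp using wall_flip(2)[OF R A bk(1) a0 Q(1)] by simp
qed

lemma sgn3': "(u::real) * v > 0 \<Longrightarrow> v * w > 0 \<Longrightarrow> u * w > 0"
  by (auto simp: zero_less_mult_iff)

lemma sgn3'': "(u::real) * v < 0 \<Longrightarrow> v * w > 0 \<Longrightarrow> u * w < 0"
  by (auto simp: zero_less_mult_iff mult_less_0_iff)

lemma walk_sign:
  assumes R: "root_system R" and A: "alcove R A0" and a0: "a0 \<in> A0" and P: "arr R P"
  shows "set xs \<subseteq> simple_refls R A0 \<Longrightarrow> (\<forall>ys s zs. xs = ys @ s # zs \<longrightarrow> \<not> par (cr R A0 ys s) P)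
     \<Longrightarrow> fl (fst P) (snd P) (fw xs a0) * fl (fst P) (snd P) a0 > 0"
proof (induction xs rule: rev_induct)
  case Nil
  then show ?case using sq_pos alc_nz[OF A a0 P] by simp
next
  case (snoc s xs)
  have xs: "set xs \<subseteq> simple_refls R A0" and s: "s \<in> simple_refls R A0" using snoc.prems(1) by auto
  have "\<forall>ys s' zs. xs = ys @ s' # zs \<longrightarrow> \<not> par (cr R A0 ys s') P"
    using snoc.prems(2) by (metis append.assoc append_Cons)
  then have 1: "fl (fst P) (snd P) (fw xs a0) * fl (fst P) (snd P) a0 > 0" using snoc.IH xs by blast
  have "\<not> par (cr R A0 xs s) P" using snoc.prems(2) by blast
  then have 2: "fl (fst P) (snd P) (fw (xs @ [s]) a0) * fl (fst P) (snd P) (fw xs a0) > 0"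
    using step_sign(2)[OF R A a0 xs s P] by blast
  show ?case using sgn3'[OF 2 1] .
qed

lemma last_sign:
  assumes R: "root_system R" and A: "alcove R A0" and a0: "a0 \<in> A0"
    and xs: "set xs \<subseteq> simple_refls R A0" and s: "s \<in> simple_refls R A0"
    and nc: "\<forall>ys s' zs. xs = ys @ s' # zs \<longrightarrow> \<not> par (cr R A0 ys s') (cr R A0 xs s)"
  shows "fl (fst (cr R A0 xs s)) (snd (cr R A0 xs s)) (fw (xs @ [s]) a0) * fl (fst (cr R A0 xs s)) (snd (cr R A0 xs s)) a0 < 0"
proof -
  let ?P = "cr R A0 xs s"
  have P: "arr R ?P" unfolding cr_def by (rule arr_img[OF fw_good[OF R xs] wall_of_arr[OF s]])
  have 1: "fl (fst ?P) (snd ?P) (fw xs a0) * fl (fst ?P) (snd ?P) a0 > 0"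
    using walk_sign[OF R A a0 P xs nc] .
  have 2: "fl (fst ?P) (snd ?P) (fw (xs @ [s]) a0) * fl (fst ?P) (snd ?P) (fw xs a0) < 0"
    using step_sign(1)[OF R A a0 xs s P par_self] .
  show ?thesis using sgn3''[OF 2 1] .
qed

lemma deletion:
  assumes R: "root_system R"
    and S: "set (ys @ s1 # zs @ s2 # us) \<subseteq> simple_refls R A0"
    and p: "par (cr R A0 ys s1) (cr R A0 (ys @ s1 # zs) s2)"
  shows "fw (ys @ s1 # zs @ s2 # us) = fw (ys @ zs @ us)"
proof -
  have s1: "s1 \<in> simple_refls R A0" and s2: "s2 \<in> simple_refls R A0" using S by auto
  have "set ys \<subseteq> simple_refls R A0" using S by auto
  then have g1: "good R (fw ys)" by (rule fw_good[OF R])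
  have "set (ys @ s1 # zs) \<subseteq> simple_refls R A0" using S by auto
  then have g2: "good R (fw (ys @ s1 # zs))" by (rule fw_good[OF R])
  have nz: "fst (wall_of R A0 t) \<noteq> 0" if "t \<in> simple_refls R A0" for t
    using wall_of_arr[OF that] rs_nz[OF R] arr_def by blast
  let ?W1 = "wall_of R A0 s1" and ?W2 = "wall_of R A0 s2"
  let ?r = "refl (fst (cr R A0 ys s1)) (snd (cr R A0 ys s1))"
  have c1: "fw ys \<circ> s1 = ?r \<circ> fw ys"
    using conj_refl[OF g1 nz[OF s1], of "snd ?W1"] wall_of_refl[OF s1] by (simp add: cr_def)
  have c2: "fw (ys @ s1 # zs) \<circ> s2 = ?r \<circ> fw (ys @ s1 # zs)"
    using conj_refl[OF g2 nz[OF s2], of "snd ?W2"] wall_of_refl[OF s2] par_refl_eq[OF p] by (simp add: cr_def)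
  have rnz: "fst (cr R A0 ys s1) \<noteq> 0"
    using arr_img[OF g1 wall_of_arr[OF s1]] rs_nz[OF R] by (simp add: cr_def arr_def)
  have rr: "?r \<circ> ?r = id" using refl_invol'[OF rnz] .
  have "fw (ys @ s1 # zs @ s2 # us) = (fw (ys @ s1 # zs) \<circ> s2) \<circ> fw us"
    by (simp add: o_assoc)
  also have "\<dots> = ?r \<circ> (fw ys \<circ> s1) \<circ> fw zs \<circ> fw us" unfolding c2 by (simp add: o_assoc)
  also have "\<dots> = (?r \<circ> ?r) \<circ> fw ys \<circ> fw zs \<circ> fw us" unfolding c1 by (simp add: o_assoc)
  also have "\<dots> = fw (ys @ zs @ us)" unfolding rr by (simp add: o_assoc)
  finally show ?thesis .
qed


lemma cl_le: assumes "set ws \<subseteq> S" "fw ws = x" shows "coxeter_length S x \<le> length ws"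
  unfolding coxeter_length_def by (rule Least_le) (use assms in \<open>auto simp: fw_def\<close>)

lemma descent_sep:
  assumes R: "root_system R" and A: "alcove R A0" and a0: "a0 \<in> A0" and W: "is_wall R A0 b k"
    and D: "coxeter_length (simple_refls R A0) (w \<circ> refl b (of_int k)) < coxeter_length (simple_refls R A0) w"
  shows "(\<exists>ws. set ws \<subseteq> simple_refls R A0 \<and> fw ws = w) \<and>
    fl (fst (img w (b, of_int k))) (snd (img w (b, of_int k))) (w a0) * fl (fst (img w (b, of_int k))) (snd (img w (b, of_int k))) a0 < 0"
proof -
  let ?S = "simple_refls R A0"
  let ?s = "refl b (of_int k)"
  let ?cl = "coxeter_length ?S"
  have s: "?s \<in> ?S" using W unfolding simple_refls_def by blast
  have bR: "b \<in> R" using W is_wall_def by blast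
  have bz: "b \<noteq> 0" using rs_nz[OF R bR] .
  have ss: "?s \<circ> ?s = id" using refl_invol'[OF bz] .
  have Ews: "\<exists>ws. set ws \<subseteq> ?S \<and> fw ws = w \<circ> ?s"
  proof (rule ccontr)
    assume n1: "\<not> ?thesis"
    have n2: "\<not> (\<exists>ws. set ws \<subseteq> ?S \<and> fw ws = w)"
    proof
      assume "\<exists>ws. set ws \<subseteq> ?S \<and> fw ws = w"
      then obtain ws where "set ws \<subseteq> ?S" "fw ws = w" by blast
      then have "set (ws @ [?s]) \<subseteq> ?S" "fw (ws @ [?s]) = w \<circ> ?s" using s by auto
      then show False using n1 by blast
    qed
    have "(\<lambda>n. \<exists>ws. length ws = n \<and> set ws \<subseteq> ?S \<and> foldr (\<circ>) ws id = w \<circ> ?s) = (\<lambda>n. False)"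
      using n1 by (auto simp: fw_def)
    then have "?cl (w \<circ> ?s) = (LEAST n. False)" unfolding coxeter_length_def by simp
    moreover have "(\<lambda>n. \<exists>ws. length ws = n \<and> set ws \<subseteq> ?S \<and> foldr (\<circ>) ws id = w) = (\<lambda>n. False)"
      using n2 by (auto simp: fw_def)
    then have "?cl w = (LEAST n. False)" unfolding coxeter_length_def by simp
    ultimately show False using D by simp
  qed
  have "\<exists>n ws. length ws = n \<and> set ws \<subseteq> ?S \<and> foldr (\<circ>) ws id = w \<circ> ?s" using Ews by (auto simp: fw_def)
  then have "\<exists>ws. length ws = ?cl (w \<circ> ?s) \<and> set ws \<subseteq> ?S \<and> foldr (\<circ>) ws id = w \<circ> ?s"
    unfolding coxeter_length_def by (rule LeastI_ex)
  then obtain us where us: "length us = ?cl (w \<circ> ?s)" "set us \<subseteq> ?S" "fw us = w \<circ> ?s"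
    by (auto simp: fw_def)
  have w: "fw (us @ [?s]) = w" using us(3) ss by (simp add: o_assoc[symmetric])
  have uss: "set (us @ [?s]) \<subseteq> ?S" using us(2) s by auto
  have clw: "?cl w = length us + 1" using cl_le[OF uss w] D us(1) by simp
  have nc: "\<forall>ys s' zs. us = ys @ s' # zs \<longrightarrow> \<not> par (cr R A0 ys s') (cr R A0 us ?s)"
  proof (intro allI impI notI)
    fix ys s' zs assume u: "us = ys @ s' # zs" and p: "par (cr R A0 ys s') (cr R A0 us ?s)"
    have S: "set (ys @ s' # zs @ ?s # []) \<subseteq> ?S" using uss u by auto
    have "fw (ys @ s' # zs @ ?s # []) = fw (ys @ zs @ [])"
      by (rule deletion[OF R S]) (use p u in simp)
    then have "fw (ys @ zs) = w" using w u by simp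
    moreover have "set (ys @ zs) \<subseteq> ?S" using S by auto
    ultimately have "?cl w \<le> length (ys @ zs)" using cl_le by blast
    then show False using clw u by simp
  qed
  let ?P = "cr R A0 us ?s"
  have ls: "fl (fst ?P) (snd ?P) (fw (us @ [?s]) a0) * fl (fst ?P) (snd ?P) a0 < 0"
    using last_sign[OF R A a0 us(2) s nc] .
  have gw: "good R w" using fw_good[OF R uss] w by simp
  have gs: "good R ?s" using good_refl[OF R bR] by simp
  obtain b' k' where bk': "is_wall R A0 b' k'" "wall_of R A0 ?s = (b', of_int k')" "?s = refl b' (of_int k')"
    using wall_of[OF s] by blast
  have b'z: "b' \<noteq> 0" using rs_nz[OF R] bk'(1) is_wall_def by blast
  have p1: "par (wall_of R A0 ?s) (b, of_int k)" using refl_eq_par[OF b'z bz] bk' by simp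
  have p2: "par (img ?s (wall_of R A0 ?s)) (b, of_int k)"
    using par_trans[OF img_par[OF gs p1] img_refl_self[OF bz]] .
  have p3: "par ?P (img w (b, of_int k))"
    unfolding cr_def us(3) img_comp[OF gw gs] by (rule img_par[OF gw p2])
  have "\<exists>ws. set ws \<subseteq> ?S \<and> fw ws = w" using uss w by blast
  moreover have "fl (fst ?P) (snd ?P) (w a0) * fl (fst ?P) (snd ?P) a0 < 0" using ls[unfolded w] .
  ultimately show ?thesis using par_fl_prod(1)[OF p3] by blast
qed


section \<open>Order analysis\<close>

lemma pow2: "f ^^ 2 = f \<circ> f" by (simp add: eval_nat_numeral)
lemma pow3: "f ^^ 3 = f \<circ> f \<circ> f" by (simp add: eval_nat_numeral o_assoc)
lemma pow4: "f ^^ 4 = f \<circ> f \<circ> f \<circ> f" by (simp add: eval_nat_numeral o_assoc)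

lemma refl_diff: "refl a k x - refl a k y = refl a 0 (x - y)"
  by (simp add: refl_def inner_diff_left algebra_simps diff_divide_distrib scaleR_diff_left)

lemma Rab:
  assumes "inner a a \<noteq> 0"
  shows "refl a 0 (x *\<^sub>R a + y *\<^sub>R b) = (- x - y * (2 * inner a b / inner a a)) *\<^sub>R a + y *\<^sub>R b"
proof -
  have "2 * (inner (x *\<^sub>R a + y *\<^sub>R b) a - 0) / inner a a = 2 * x + y * (2 * inner a b / inner a a)"
    using assms by (simp add: inner_add_left inner_add_right field_simps inner_commute)
  then show ?thesis unfolding refl_def by (simp add: vec_eq2 algebra_simps)
qed

lemma Rba:
  assumes "inner b b \<noteq> 0"
  shows "refl b 0 (x *\<^sub>R a + y *\<^sub>R b) = x *\<^sub>R a + (- y - x * (2 * inner a b / inner b b)) *\<^sub>R b"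
proof -
  have "2 * (inner (x *\<^sub>R a + y *\<^sub>R b) b - 0) / inner b b = 2 * y + x * (2 * inner a b / inner b b)"
    using assms by (simp add: inner_add_left inner_add_right field_simps inner_commute)
  then show ?thesis unfolding refl_def by (simp add: vec_eq2 algebra_simps)
qed

lemma indep_coef:
  assumes "det2 a b \<noteq> 0" "x *\<^sub>R a + y *\<^sub>R b = x' *\<^sub>R a + y' *\<^sub>R b" shows "y = y'"
proof -
  have "det2 a (x *\<^sub>R a + y *\<^sub>R b) = y * det2 a b" "det2 a (x' *\<^sub>R a + y' *\<^sub>R b) = y' * det2 a b"
    by (simp_all add: det2_def algebra_simps)
  then show ?thesis using assms by simp
qed

lemma order_analysis:
  assumes R: "root_system R" and a: "a \<in> R" and b: "b \<in> R" and k: "k \<in> \<int>" and k0: "k \<noteq> 0"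
    and H4: "(refl a k \<circ> refl b 0) ^^ 4 = id"
    and Hn: "\<forall>n. 0 < n \<and> n < 4 \<longrightarrow> (refl a k \<circ> refl b 0) ^^ n \<noteq> id"
  shows "2 * (inner a b)^2 = inner a a * inner b b \<and> det2 a b \<noteq> 0"
proof -
  let ?s = "refl a k" and ?t = "refl b 0"
  let ?A = "inner a a" and ?B = "inner b b" and ?C = "inner a b"
  define u where "u = 2 * ?C / ?A"
  define v where "v = 2 * ?C / ?B"
  have az: "a \<noteq> 0" using rs_nz[OF R a] .
  have bz: "b \<noteq> 0" using rs_nz[OF R b] .
  have Ap: "?A > 0" and Bp: "?B > 0" using az bz by simp_all
  have uI: "u \<in> \<int>" using R a b unfolding root_system_def u_def by blast
  have "2 * inner b a / inner b b \<in> \<int>" using R a b unfolding root_system_def by blast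
  then have vI: "v \<in> \<int>" unfolding v_def by (simp add: inner_commute)
  have q: "u * v = 4 * ?C^2 / (?A * ?B)" unfolding u_def v_def by (simp add: power2_eq_square)
  have lag: "?A * ?B - ?C^2 = (det2 a b)^2" by (rule lagrange2)
  have q0: "u * v \<ge> 0" unfolding q using Ap Bp by simp
  have q4: "u * v \<le> 4" unfolding q using Ap Bp lag
    by (simp add: divide_le_eq) (smt (verit) zero_le_power2)
  have det_eq: "(det2 a b)^2 = ?A * ?B * (1 - u * v / 4)"
    unfolding lag[symmetric] q using Ap Bp by (simp add: field_simps)
  obtain iu iv where iu: "u = of_int iu" and iv: "v = of_int iv" using uI vI Ints_cases by metis
  have qi: "u * v = of_int (iu * iv)" using iu iv by simp
  have z1: "0 \<le> iu * iv" using q0 qi of_int_0_le_iff by metis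
  have z2: "iu * iv \<le> 4" using q4 qi of_int_le_numeral_iff by metis
  have qq: "\<forall>m::int. 0 \<le> m \<longrightarrow> m \<le> 4 \<longrightarrow> m = 0 \<or> m = 1 \<or> m = 2 \<or> m = 3 \<or> m = 4" by presburger
  have qr: "iu * iv = 0 \<or> iu * iv = 1 \<or> iu * iv = 2 \<or> iu * iv = 3 \<or> iu * iv = 4"
    using qq z1 z2 by blast
  have gs: "good R ?s" using good_refl[OF R a k] .
  have gt: "good R ?t" using good_refl[OF R b] by simp
  have ss: "?s \<circ> ?s = id" using refl_invol'[OF az] .
  have tt: "?t \<circ> ?t = id" using refl_invol'[OF bz] .
  have s0: "?s 0 = (2 * k / ?A) *\<^sub>R a" by (simp add: refl_0)
  have t0: "?t 0 = 0" by (simp add: refl_0)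
  have img_s: "img ?s (b, 0) = (b - u *\<^sub>R a, - k * u)"
  proof -
    have 1: "?s b - ?s 0 = b - u *\<^sub>R a" using refl_lin[of a k b] unfolding u_def
      by (simp add: refl_def inner_commute)
    have "inner ((2 * k / ?A) *\<^sub>R a) (b - u *\<^sub>R a) = - k * u"
      using Ap unfolding u_def by (simp add: inner_diff_right field_simps)
    then show ?thesis unfolding img_def using 1 s0 by simp
  qed
  have img_t: "img ?t (a, k) = (a - v *\<^sub>R b, k)"
  proof -
    have 1: "?t a - ?t 0 = a - v *\<^sub>R b" unfolding v_def by (simp add: refl_def inner_commute)
    then show ?thesis unfolding img_def using t0 by simp
  qed
  have conj_s: "?s \<circ> ?t = refl (b - u *\<^sub>R a) (- k * u) \<circ> ?s"
    using conj_refl[OF gs bz, of 0] img_s by simp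
  have conj_t: "?t \<circ> ?s = refl (a - v *\<^sub>R b) k \<circ> ?t"
    using conj_refl[OF gt az, of k] img_t by simp
  have ndet: "iu * iv \<noteq> 4 \<Longrightarrow> det2 a b \<noteq> 0"
  proof
    assume "iu * iv \<noteq> 4" "det2 a b = 0"
    then have "1 - u * v / 4 = 0" using det_eq Ap Bp by simp
    then have "u * v = 4" by simp
    then have "iu * iv = 4" using qi of_int_eq_numeral_iff by metis
    then show False using \<open>iu * iv \<noteq> 4\<close> by simp
  qed
  consider "iu * iv = 0" | "iu * iv = 1" | "iu * iv = 2" | "iu * iv = 3" | "iu * iv = 4" using qr by blast
  then show ?thesis
  proof cases
    case 1
    then have "u * v = 0" using qi by simp
    then have C0: "?C = 0" unfolding q using Ap Bp by simp
    then have u0: "u = 0" unfolding u_def by simp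
    have "?s \<circ> ?t = ?t \<circ> ?s" using conj_s u0 by simp
    then have "(?s \<circ> ?t) ^^ 2 = (?s \<circ> ?s) \<circ> (?t \<circ> ?t)" unfolding pow2 by (metis o_assoc)
    then have "(?s \<circ> ?t) ^^ 2 = id" using ss tt by simp
    then show ?thesis using Hn by force
  next
    case 2
    then have "(iu = 1 \<and> iv = 1) \<or> (iu = -1 \<and> iv = -1)" using zmult_eq_1_iff by blast
    then have uv: "u = v" "u * u = 1" using iu iv by auto
    have "par (a - v *\<^sub>R b, k) (b - u *\<^sub>R a, - k * u)"
      unfolding par_def using uv
      by (intro exI[of _ "-u"]) (auto simp: algebra_simps)
    then have re: "refl (a - v *\<^sub>R b) k = refl (b - u *\<^sub>R a) (- k * u)" using par_refl_eq by fastforce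
    have sts: "?s \<circ> ?t \<circ> ?s = ?t \<circ> ?s \<circ> ?t"
    proof -
      have "?s \<circ> ?t \<circ> ?s = refl (b - u *\<^sub>R a) (- k * u)" using conj_s ss by (simp add: o_assoc[symmetric])
      moreover have "?t \<circ> ?s \<circ> ?t = refl (a - v *\<^sub>R b) k" using conj_t tt by (simp add: o_assoc[symmetric])
      ultimately show ?thesis using re by simp
    qed
    have "(?s \<circ> ?t) ^^ 3 = (?s \<circ> ?t \<circ> ?s) \<circ> (?t \<circ> ?s \<circ> ?t)" unfolding pow3 by (simp add: o_assoc)
    also have "\<dots> = ?t \<circ> ?s \<circ> (?t \<circ> ?t) \<circ> ?s \<circ> ?t" unfolding sts by (simp add: o_assoc)
    also have "\<dots> = ?t \<circ> (?s \<circ> ?s) \<circ> ?t" unfolding tt by (simp add: o_assoc)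
    also have "\<dots> = id" unfolding ss using tt by simp
    finally show ?thesis using Hn by force
  next
    case 3
    then have "u * v = 2" using qi by simp
    then have "2 * ?C^2 = ?A * ?B" unfolding q using Ap Bp by (simp add: field_simps)
    then show ?thesis using ndet 3 by simp
  next
    case 4
    then have uv: "u * v = 3" using qi by simp
    have dn: "det2 a b \<noteq> 0" using ndet 4 by simp
    let ?f = "?s \<circ> ?t" and ?h = "?t \<circ> ?s"
    have fh: "?f \<circ> ?h = id" using ss tt by (simp add: o_assoc) (metis comp_id o_assoc)
    have hf: "?h \<circ> ?f = id" using ss tt by (simp add: o_assoc) (metis comp_id o_assoc)
    have f4: "?f \<circ> ?f \<circ> ?f \<circ> ?f = id" using H4 pow4 by metis
    have ff: "?f \<circ> ?f = ?h \<circ> ?h"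
    proof -
      have "?h \<circ> ?h = ?h \<circ> ?h \<circ> (?f \<circ> ?f \<circ> ?f \<circ> ?f)" using f4 by simp
      also have "\<dots> = ?h \<circ> (?h \<circ> ?f) \<circ> ?f \<circ> ?f \<circ> ?f" by (simp add: o_assoc)
      also have "\<dots> = ?h \<circ> ?f \<circ> ?f \<circ> ?f" using hf by simp
      also have "\<dots> = ?f \<circ> ?f" using hf by (simp add: o_assoc)
      finally show ?thesis by simp
    qed
    let ?Ra = "refl a 0" and ?Rb = "refl b 0"
    have l1: "(?f \<circ> ?f) x - (?f \<circ> ?f) 0 = ?Ra (?Rb (?Ra (?Rb x)))" for x
      by (simp add: refl_diff[of a k] refl_diff[of b 0])
    have l2: "(?h \<circ> ?h) x - (?h \<circ> ?h) 0 = ?Rb (?Ra (?Rb (?Ra x)))" for x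
      by (simp add: refl_diff[of a k] refl_diff[of b 0])
    have e: "?Ra (?Rb (?Ra (?Rb b))) = ?Rb (?Ra (?Rb (?Ra b)))" using l1 l2 ff by metis
    have Ra': "?Ra (x *\<^sub>R a + y *\<^sub>R b) = (- x - y * u) *\<^sub>R a + y *\<^sub>R b" for x y
      using Rab[of a x y b] Ap unfolding u_def by simp
    have Rb': "?Rb (x *\<^sub>R a + y *\<^sub>R b) = x *\<^sub>R a + (- y - x * v) *\<^sub>R b" for x y
      using Rba[of b x a y] Bp unfolding v_def by simp
    have bb: "b = 0 *\<^sub>R a + 1 *\<^sub>R b" by simp
    have "?Ra (?Rb (?Ra (?Rb (0 *\<^sub>R a + 1 *\<^sub>R b)))) = ?Rb (?Ra (?Rb (?Ra (0 *\<^sub>R a + 1 *\<^sub>R b))))"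
      using e bb by simp
    note E2 = this[unfolded Ra' Rb']
    have False using indep_coef[OF dn E2] uv by (auto simp: algebra_simps)
    then show ?thesis ..
  next
    case 5
    then have "u * v = 4" using qi by simp
    then have "(det2 a b)^2 = 0" using det_eq by simp
    then have "det2 a b = 0" by simp
    then obtain l where l: "b = l *\<^sub>R a" using det0_par[OF _ az] by blast
    have "l = 1 \<or> l = -1" using R a b l unfolding root_system_def by blast
    then have "par (a, 0) (b, 0)" unfolding par_def using l by (intro exI[of _ l]) auto
    then have tR: "?t = refl a 0" using par_refl_eq by fastforce
    define c where "c = 2 * k / ?A"
    have f: "?s (?t x) = x + c *\<^sub>R a" for x
    proof -
      have "?s (?t x) = refl a 0 (refl a 0 x) + ?s 0" using refl_lin[of a k "?t x"] tR by (simp add: algebra_simps)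
      then show ?thesis using refl_invol[OF az] s0 c_def by simp
    qed
    have fn: "((?s \<circ> ?t) ^^ n) x = x + (real n * c) *\<^sub>R a" for n x
    proof (induction n)
      case 0 then show ?case by simp
    next
      case (Suc n)
      have "((?s \<circ> ?t) ^^ Suc n) x = ?s (?t (((?s \<circ> ?t) ^^ n) x))" by simp
      also have "\<dots> = x + (real n * c) *\<^sub>R a + c *\<^sub>R a" unfolding f Suc.IH ..
      also have "\<dots> = x + (real (Suc n) * c) *\<^sub>R a" by (simp add: distrib_right scaleR_add_left)
      finally show ?case .
    qed
    have "((?s \<circ> ?t) ^^ 4) 0 = 0" using H4 by simp
    then have "(4 * c) *\<^sub>R a = 0" using fn[of 4 0] by simp
    then show ?thesis using az k0 Ap c_def by simp
  qed
qed


section \<open>Special point\<close>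

lemma gram2: "inner (a::pt) a * inner b b * inner c c - inner a a * (inner c b)^2 - (inner a b)^2 * inner c c
   + 2 * inner a b * inner c a * inner c b - inner b b * (inner c a)^2 = 0"
  by (simp add: inner2 power2_eq_square algebra_simps)

lemma int_sol: "0 \<le> (i1::int) \<Longrightarrow> i1 \<le> 4 \<Longrightarrow> 0 \<le> i2 \<Longrightarrow> i2 \<le> 4 \<Longrightarrow> (i1 + i2 - 2)^2 = 2 * i1 * i2
  \<Longrightarrow> i1 = 0 \<or> i1 = 4 \<or> i2 = 0 \<or> i2 = 4"
proof -
  have qq: "\<forall>m::int. 0 \<le> m \<longrightarrow> m \<le> 4 \<longrightarrow> m = 0 \<or> m = 1 \<or> m = 2 \<or> m = 3 \<or> m = 4" by presburger
  assume h: "0 \<le> i1" "i1 \<le> 4" "0 \<le> i2" "i2 \<le> 4" "(i1 + i2 - 2)^2 = 2 * i1 * i2"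
  have "i1 = 0 \<or> i1 = 1 \<or> i1 = 2 \<or> i1 = 3 \<or> i1 = 4" using qq h by blast
  moreover have "i2 = 0 \<or> i2 = 1 \<or> i2 = 2 \<or> i2 = 3 \<or> i2 = 4" using qq h by blast
  ultimately show ?thesis using h(5) by (elim disjE) (simp_all add: power2_eq_square)
qed

lemma perp_roots:
  assumes R: "root_system R" and g: "g \<in> R" and d: "d \<in> R" and az: "a \<noteq> 0"
    and ga: "inner g a = 0" and da: "inner d a = 0"
  shows "g = d \<or> g = - d"
proof -
  obtain m1 where m1: "g = m1 *\<^sub>R rot a" using perp2[OF az ga] by blast
  obtain m2 where m2: "d = m2 *\<^sub>R rot a" using perp2[OF az da] by blast
  have dz: "d \<noteq> 0" using rs_nz[OF R d] .
  then have m2z: "m2 \<noteq> 0" using m2 by auto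
  have "g = (m1 / m2) *\<^sub>R d" using m1 m2 m2z by simp
  moreover then have "m1 / m2 = 1 \<or> m1 / m2 = -1" using R d g unfolding root_system_def by metis
  ultimately show ?thesis by auto
qed

lemma special_point:
  assumes R: "root_system R" and a: "a \<in> R" and b: "b \<in> R"
    and rel: "2 * (inner a b)^2 = inner a a * inner b b" and dn: "det2 a b \<noteq> 0"
    and pa: "inner p a \<in> \<int>" and pb: "inner p b = 0" and g: "g \<in> R"
  shows "inner p g \<in> \<int>"
proof -
  let ?A = "inner a a" and ?B = "inner b b" and ?C = "inner a b"
  let ?X = "inner g a" and ?Y = "inner g b" and ?G = "inner g g"
  have az: "a \<noteq> 0" using rs_nz[OF R a] .
  have bz: "b \<noteq> 0" using rs_nz[OF R b] .
  have gz: "g \<noteq> 0" using rs_nz[OF R g] .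
  have Ap: "?A > 0" and Bp: "?B > 0" and Gp: "?G > 0" using az bz gz by simp_all
  have I: "\<And>x y. x \<in> R \<Longrightarrow> y \<in> R \<Longrightarrow> 2 * inner x y / inner x x \<in> \<int>"
    using R unfolding root_system_def by blast
  have m1: "2 * ?X / ?A \<in> \<int>" using I[OF a g] by (simp add: inner_commute)
  have m1': "2 * ?X / ?G \<in> \<int>" using I[OF g a] .
  have m2: "2 * ?Y / ?B \<in> \<int>" using I[OF b g] by (simp add: inner_commute)
  have m2': "2 * ?Y / ?G \<in> \<int>" using I[OF g b] .
  define p1 where "p1 = 4 * ?X^2 / (?A * ?G)"
  define p2 where "p2 = 4 * ?Y^2 / (?B * ?G)"
  have p1e: "p1 = (2 * ?X / ?A) * (2 * ?X / ?G)" unfolding p1_def by (simp add: power2_eq_square)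
  have p2e: "p2 = (2 * ?Y / ?B) * (2 * ?Y / ?G)" unfolding p2_def by (simp add: power2_eq_square)
  obtain i1 where i1: "p1 = of_int i1" using p1e m1 m1' Ints_mult Ints_cases by metis
  obtain i2 where i2: "p2 = of_int i2" using p2e m2 m2' Ints_mult Ints_cases by metis
  have l1: "?A * ?G - ?X^2 = (det2 a g)^2" using lagrange2[of a g] by (simp add: inner_commute)
  have l2: "?B * ?G - ?Y^2 = (det2 b g)^2" using lagrange2[of b g] by (simp add: inner_commute)
  have p1b: "0 \<le> p1" "p1 \<le> 4" unfolding p1_def using Ap Gp l1
    by (simp_all add: divide_le_eq) (smt (verit) zero_le_power2)
  have p2b: "0 \<le> p2" "p2 \<le> 4" unfolding p2_def using Bp Gp l2
    by (simp_all add: divide_le_eq) (smt (verit) zero_le_power2)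
  have GI: "?A * ?B * ?G - ?A * ?Y^2 - ?C^2 * ?G + 2 * ?C * ?X * ?Y - ?B * ?X^2 = 0"
    using gram2[of a b g] .
  have k1: "4 * ?X^2 * ?B + 4 * ?Y^2 * ?A - 2 * ?A * ?B * ?G = 8 * ?C * ?X * ?Y"
    using GI rel by algebra
  have k2: "p1 + p2 - 2 = (4 * ?X^2 * ?B + 4 * ?Y^2 * ?A - 2 * ?A * ?B * ?G) / (?A * ?B * ?G)"
    unfolding p1_def p2_def using Ap Bp Gp by (simp add: field_simps)
  have k3: "(p1 + p2 - 2)^2 = 2 * p1 * p2"
  proof -
    have "(p1 + p2 - 2)^2 = (8 * ?C * ?X * ?Y)^2 / (?A * ?B * ?G)^2" unfolding k2 k1 by (simp add: power_divide)
    also have "\<dots> = 32 * (?A * ?B) * ?X^2 * ?Y^2 / (?A * ?B * ?G)^2"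
      using rel by (simp add: power_mult_distrib)
    also have "\<dots> = 2 * p1 * p2" unfolding p1_def p2_def using Ap Bp Gp
      by (simp add: field_simps power2_eq_square)
    finally show ?thesis .
  qed
  have "of_int ((i1 + i2 - 2)^2) = (of_int (2 * i1 * i2) :: real)" using k3 i1 i2 by simp
  then have k4: "(i1 + i2 - 2)^2 = 2 * i1 * i2" using of_int_eq_iff by blast
  have "0 \<le> i1" "i1 \<le> 4" "0 \<le> i2" "i2 \<le> 4" using p1b p2b i1 i2 by simp_all
  then have cases: "i1 = 0 \<or> i1 = 4 \<or> i2 = 0 \<or> i2 = 4" using int_sol k4 by blast
  have pg_d: "inner p g \<in> \<int>" if gd: "g = d \<or> g = - d" and pd: "inner p d \<in> \<int>" for d
    using gd pd by (auto simp: inner_minus_right)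
  have pAG: "(4 * ?X^2 / (?A * ?G) = 4) = (?X^2 = ?A * ?G)" using Ap Gp by (simp add: field_simps)
  have pBG: "(4 * ?Y^2 / (?B * ?G) = 4) = (?Y^2 = ?B * ?G)" using Bp Gp by (simp add: field_simps)
  from cases show ?thesis
  proof (elim disjE)
    assume "i1 = 4"
    then have "?X^2 = ?A * ?G" using i1 pAG unfolding p1_def by simp
    then have "det2 a g = 0" using l1 by simp
    then obtain l where l: "g = l *\<^sub>R a" using det0_par[OF _ az] by blast
    then have "l = 1 \<or> l = -1" using R a g unfolding root_system_def by blast
    then show ?thesis using l pa by (auto simp: inner_minus_right)
  next
    assume "i2 = 4"
    then have "?Y^2 = ?B * ?G" using i2 pBG unfolding p2_def by simp
    then have "det2 b g = 0" using l2 by simp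
    then obtain l where l: "g = l *\<^sub>R b" using det0_par[OF _ bz] by blast
    then show ?thesis using pb by simp
  next
    assume "i1 = 0"
    then have X0: "?X = 0" using i1 Ap Gp unfolding p1_def by simp
    let ?d = "refl b 0 a"
    have dR: "?d \<in> R" using R a b unfolding root_system_def by blast
    have de: "?d = a - (2 * ?C / ?B) *\<^sub>R b" by (simp add: refl_def inner_commute)
    have "inner ?d a = ?A - 2 * ?C^2 / ?B" unfolding de by (simp add: inner_diff_left inner_diff_right power2_eq_square inner_commute)
    also have "\<dots> = 0" using rel Bp by (simp add: field_simps)
    finally have da: "inner ?d a = 0" .
    have "inner p ?d = inner p a" unfolding de using pb by (simp add: inner_diff_right)
    then have pd: "inner p ?d \<in> \<int>" using pa by simp
    show ?thesis using pg_d[OF perp_roots[OF R g dR az X0 da] pd] .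
  next
    assume "i2 = 0"
    then have Y0: "?Y = 0" using i2 Bp Gp unfolding p2_def by simp
    let ?d = "refl a 0 b"
    have dR: "?d \<in> R" using R a b unfolding root_system_def by blast
    have de: "?d = b - (2 * ?C / ?A) *\<^sub>R a" by (simp add: refl_def inner_commute)
    have "inner ?d b = ?B - 2 * ?C^2 / ?A" unfolding de by (simp add: inner_diff_left inner_diff_right power2_eq_square inner_commute)
    also have "\<dots> = 0" using rel Ap by (simp add: field_simps)
    finally have db: "inner ?d b = 0" .
    have uI: "2 * ?C / ?A \<in> \<int>" using I[OF a b] .
    have e: "inner p ?d = - (2 * ?C / ?A) * inner p a" unfolding de using pb by (simp add: inner_diff_right)
    have "- (2 * ?C / ?A) * inner p a \<in> \<int>" using pa uI by (intro Ints_mult Ints_minus)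
    then have pd: "inner p ?d \<in> \<int>" unfolding e .
    show ?thesis using pg_d[OF perp_roots[OF R g dR bz Y0 db] pd] .
  qed
qed


section \<open>Cone separation\<close>

lemma neg_prod: "(c::real) < 0 \<Longrightarrow> c * w \<ge> 0 \<Longrightarrow> w \<ge> 0 \<Longrightarrow> w = 0"
proof (rule ccontr)
  assume h: "c < 0" "c * w \<ge> 0" "w \<ge> 0" "w \<noteq> 0"
  then have "w > 0" by simp
  then have "c * w < 0" using h(1) by (simp add: mult_neg_pos)
  then show False using h(2) by simp
qed

lemma cone_arith:
  fixes c1 c2 ua va ub vb :: real
  assumes "c1 \<ge> 0" "c2 \<ge> 0" "ub < 0" "vb < 0" "c1 * ua + c2 * va > 0"
  shows "c1 * ub + c2 * vb < 0"
proof (cases "c1 = 0")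
  case True
  then have "c2 \<noteq> 0" using assms(5) by auto
  then have "c2 > 0" using assms(2) by simp
  then show ?thesis using True assms(4) by (simp add: mult_pos_neg)
next
  case False
  then have "c1 > 0" using assms(1) by simp
  then have "c1 * ub < 0" using assms(3) by (simp add: mult_pos_neg)
  moreover have "c2 * vb \<le> 0" using assms(2,4) by (simp add: mult_nonneg_nonpos)
  ultimately show ?thesis by simp
qed

lemma cone_sep:
  assumes R: "root_system R" and A: "alcove R A0" and a0: "a0 \<in> A0"
    and Wa: "is_wall R A0 a ka" and Wb: "is_wall R A0 b 0" and dn: "det2 a b \<noteq> 0"
    and pa: "inner p a = of_int ka" and pb: "inner p b = 0"
    and d: "dl \<in> R" and dI: "inner p dl \<in> \<int>"
    and sa: "fl a (of_int ka) a0 * fl a (of_int ka) b0 < 0"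
    and sb: "fl b 0 a0 * fl b 0 b0 < 0"
  shows "fl dl (inner p dl) a0 * fl dl (inner p dl) b0 < 0"
proof -
  let ?fs = "fl a (of_int ka)" and ?ft = "fl b 0" and ?g = "fl dl (inner p dl)"
  have aR: "a \<in> R" and bR: "b \<in> R" using Wa Wb is_wall_def by blast+
  have Pa: "arr R (a, of_int ka)" and Pb: "arr R (b, 0)" and Pd: "arr R (dl, inner p dl)"
    using aR bR d dI by (auto simp: arr_def)
  have fs: "?fs x = inner (x - p) a" for x using pa by (simp add: fl_def inner_diff_left)
  have ft: "?ft x = inner (x - p) b" for x using pb by (simp add: fl_def inner_diff_left)
  define a1 where "a1 = det2 dl b / det2 a b"
  define a2 where "a2 = det2 a dl / det2 a b"
  have dec: "dl = a1 *\<^sub>R a + a2 *\<^sub>R b" unfolding a1_def a2_def by (rule decomp2[OF dn])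
  have gx: "?g x = a1 * ?fs x + a2 * ?ft x" for x
  proof -
    have "?g x = inner (x - p) dl" by (simp add: fl_def inner_diff_left)
    also have "\<dots> = a1 * inner (x - p) a + a2 * inner (x - p) b"
      by (subst dec) (simp add: inner_add_right)
    finally show ?thesis using fs ft by simp
  qed
  define F where "F = ?fs a0"
  define T where "T = ?ft a0"
  define g0 where "g0 = ?g a0"
  have Fz: "F \<noteq> 0" unfolding F_def using alc_nz[OF A a0 Pa] by simp
  have Tz: "T \<noteq> 0" unfolding T_def using alc_nz[OF A a0 Pb] by simp
  have gz: "g0 \<noteq> 0" unfolding g0_def using alc_nz[OF A a0 Pd] by simp
  define c1 where "c1 = g0 * a1 / F"
  define c2 where "c2 = g0 * a2 / T"
  have key: "?g x * g0 = c1 * (?fs x * F) + c2 * (?ft x * T)" for x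
    unfolding c1_def c2_def gx using Fz Tz by (simp add: field_simps)
  have clU: "?fs z * F \<ge> 0" if "z \<in> closure A0" for z
    unfolding F_def using alc_closure_sign[OF A a0 Pa that] by simp
  have clV: "?ft z * T \<ge> 0" if "z \<in> closure A0" for z
    unfolding T_def using alc_closure_sign[OF A a0 Pb that] by simp
  have clG: "?g z * g0 \<ge> 0" if "z \<in> closure A0" for z
    unfolding g0_def using alc_closure_sign[OF A a0 Pd that] by simp
  have onlyp: "z = p" if "?fs z = 0" "?ft z = 0" for z
  proof -
    have "inner (z - p) a = 0" "inner (z - p) b = 0" using that fs ft by simp_all
    then have "z - p = 0" by (rule perp0[OF dn])
    then show ?thesis by simp
  qed
  have c2p: "c2 \<ge> 0"
  proof (rule ccontr)
    assume c2n: "\<not> c2 \<ge> 0"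
    obtain x y where xy: "x \<noteq> y" "x \<in> closure A0 \<inter> hyp a (of_int ka)" "y \<in> closure A0 \<inter> hyp a (of_int ka)"
      using Wa is_wall_def by blast
    have "z = p" if z: "z \<in> closure A0 \<inter> hyp a (of_int ka)" for z
    proof -
      have z0: "?fs z = 0" using z by (simp add: hyp_def fl_def)
      have "c2 * (?ft z * T) \<ge> 0" using clG[of z] key[of z] z0 z by simp
      moreover have "?ft z * T \<ge> 0" using clV z by blast
      ultimately have "?ft z * T = 0" using c2n by (intro neg_prod[of c2]) auto
      then have "?ft z = 0" using Tz by simp
      then show ?thesis using onlyp z0 by blast
    qed
    then show False using xy by blast
  qed
  have c1p: "c1 \<ge> 0"
  proof (rule ccontr)
    assume c1n: "\<not> c1 \<ge> 0"
    obtain x y where xy: "x \<noteq> y" "x \<in> closure A0 \<inter> hyp b (of_int 0)" "y \<in> closure A0 \<inter> hyp b (of_int 0)"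
      using Wb is_wall_def by blast
    have "z = p" if z: "z \<in> closure A0 \<inter> hyp b (of_int 0)" for z
    proof -
      have z0: "?ft z = 0" using z by (simp add: hyp_def fl_def)
      have "c1 * (?fs z * F) \<ge> 0" using clG[of z] key[of z] z0 z by simp
      moreover have "?fs z * F \<ge> 0" using clU z by blast
      ultimately have "?fs z * F = 0" using c1n by (intro neg_prod[of c1]) auto
      then have "?fs z = 0" using Fz by simp
      then show ?thesis using onlyp z0 by blast
    qed
    then show False using xy by blast
  qed
  have pos: "c1 * (?fs a0 * F) + c2 * (?ft a0 * T) > 0"
    using key[of a0] sq_pos[OF gz] unfolding g0_def[symmetric] by simp
  have ub: "?fs b0 * F < 0" using sa unfolding F_def by (simp add: mult.commute)
  have vb: "?ft b0 * T < 0" using sb unfolding T_def by (simp add: mult.commute)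
  have "?g b0 * g0 < 0" unfolding key using cone_arith[OF c1p c2p ub vb pos] .
  then show ?thesis unfolding g0_def by (simp add: mult.commute)
qed


theorem lemma4p42:
  fixes R A0 :: "(real^2) set" and w :: "real^2 \<Rightarrow> real^2"
    and \<alpha> \<beta>0 \<beta>i :: "real^2" and c k0 :: int
  assumes "root_system R" and "irreducible_rs R"
    and "alcove R A0" and "0 \<in> closure A0"
    and "is_wall R A0 \<beta>0 k0" and "k0 \<noteq> 0"
    and "is_wall R A0 \<beta>i 0"
    and "w \<in> affW R"
    and "\<alpha> \<in> R"
    and "A0 \<subseteq> {v. of_int c < inner v \<alpha> \<and> inner v \<alpha> < of_int c + 1}"
    and "w ` A0 \<subseteq> {v. of_int c < inner v \<alpha> \<and> inner v \<alpha> < of_int c + 1}"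
    and "right_descents (simple_refls R A0) w = {refl \<beta>0 (of_int k0), refl \<beta>i 0}"
  shows "\<not> ((refl \<beta>0 (of_int k0) \<circ> refl \<beta>i 0) ^^ 4 = id \<and>
            (\<forall>n. 0 < n \<and> n < 4 \<longrightarrow> (refl \<beta>0 (of_int k0) \<circ> refl \<beta>i 0) ^^ n \<noteq> id))"
proof
  assume H: "(refl \<beta>0 (of_int k0) \<circ> refl \<beta>i 0) ^^ 4 = id \<and>
            (\<forall>n. 0 < n \<and> n < 4 \<longrightarrow> (refl \<beta>0 (of_int k0) \<circ> refl \<beta>i 0) ^^ n \<noteq> id)"
  note R = assms(1) and A = assms(3) and W0 = assms(5) and k0 = assms(6) and Wi = assms(7)
  note al = assms(9) and st1 = assms(10) and st2 = assms(11) and DR = assms(12)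
  let ?S = "simple_refls R A0"
  have b0R: "\<beta>0 \<in> R" and biR: "\<beta>i \<in> R" using W0 Wi is_wall_def by blast+
  obtain x0 where x0: "x0 \<notin> hyp_union R" "A0 = connected_component_set (- hyp_union R) x0"
    using A alcove_def by blast
  define a0 where "a0 = x0"
  have a0: "a0 \<in> A0" using x0 unfolding a0_def by simp
  have d1: "coxeter_length ?S (w \<circ> refl \<beta>0 (of_int k0)) < coxeter_length ?S w"
    using DR unfolding right_descents_def by blast
  have d2: "coxeter_length ?S (w \<circ> refl \<beta>i (of_int 0)) < coxeter_length ?S w"
    using DR unfolding right_descents_def by auto
  note D1 = descent_sep[OF R A a0 W0 d1]
  note D2 = descent_sep[OF R A a0 Wi d2]
  have "\<exists>ws. set ws \<subseteq> ?S \<and> fw ws = w" using D1 by (rule conjunct1)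
  then obtain ws where ws: "set ws \<subseteq> ?S" "fw ws = w" by blast
  have gw: "good R w" using fw_good[OF R ws(1)] ws(2) by simp
  have "surj (\<lambda>x. w x - w 0)" using orthogonal_transformation_surj[OF good_L[OF gw]] .
  then have "a0 - w 0 \<in> range (\<lambda>x. w x - w 0)" by simp
  then obtain y where y0: "a0 - w 0 = w y - w 0" by auto
  then have y: "w y - w 0 = a0 - w 0" by simp
  define b0 where "b0 = y"
  have wb0: "w b0 = a0" using y unfolding b0_def by simp
  have tr: "fl (fst (img w P)) (snd (img w P)) (w x) = fl (fst P) (snd P) x" for P x
    using fl_img[OF gw] .
  have sgen: "fl b kk a0 * fl b kk b0 < 0"
    if D: "fl (fst (img w (b, kk))) (snd (img w (b, kk))) (w a0) * fl (fst (img w (b, kk))) (snd (img w (b, kk))) a0 < 0"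
    for b kk
  proof -
    have e1: "fl (fst (img w (b, kk))) (snd (img w (b, kk))) (w a0) = fl b kk a0" using tr[of "(b, kk)" a0] by simp
    have e2: "fl (fst (img w (b, kk))) (snd (img w (b, kk))) a0 = fl b kk b0" using tr[of "(b, kk)" b0] unfolding wb0 by simp
    show ?thesis using D unfolding e1 e2 .
  qed
  have sa: "fl \<beta>0 (of_int k0) a0 * fl \<beta>0 (of_int k0) b0 < 0"
    by (rule sgen) (use D1 in blast)
  have sb': "fl \<beta>i (of_int 0) a0 * fl \<beta>i (of_int 0) b0 < 0"
    by (rule sgen) (use D2 in blast)
  have sb: "fl \<beta>i 0 a0 * fl \<beta>i 0 b0 < 0" using sb' by simp
  have kI: "(of_int k0 :: real) \<in> \<int>" by simp
  have kz: "(of_int k0 :: real) \<noteq> 0" using k0 by simp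
  have OA: "2 * (inner \<beta>0 \<beta>i)^2 = inner \<beta>0 \<beta>0 * inner \<beta>i \<beta>i \<and> det2 \<beta>0 \<beta>i \<noteq> 0"
    using order_analysis[OF R b0R biR kI kz] H by blast
  then have rel: "2 * (inner \<beta>0 \<beta>i)^2 = inner \<beta>0 \<beta>0 * inner \<beta>i \<beta>i" and dn: "det2 \<beta>0 \<beta>i \<noteq> 0" by auto
  define p where "p = (- of_int k0 / det2 \<beta>0 \<beta>i) *\<^sub>R rot \<beta>i"
  have "inner (rot \<beta>i) \<beta>0 = - det2 \<beta>0 \<beta>i" by (simp add: inner2 det2_def)
  then have pa: "inner p \<beta>0 = of_int k0" unfolding p_def using dn by simp
  have pb: "inner p \<beta>i = 0" unfolding p_def by (simp add: rot_perp)
  have paI: "inner p \<beta>0 \<in> \<int>" using pa by simp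
  have fin: "finite R" using R root_system_def by blast
  obtain dl where dl: "dl \<in> R" "w dl - w 0 = \<alpha>" using good_surj[OF gw fin al] by blast
  have dI: "inner p dl \<in> \<int>" using special_point[OF R b0R biR rel dn paI pb dl(1)] .
  have cs: "fl dl (inner p dl) a0 * fl dl (inner p dl) b0 < 0"
    by (rule cone_sep[OF R A a0 W0 Wi dn pa pb dl(1) dI sa sb])
  define m where "m = inner p dl + inner (w 0) \<alpha>"
  have im: "img w (dl, inner p dl) = (\<alpha>, m)" unfolding img_def m_def using dl(2) by simp
  have mI: "m \<in> \<int>"
  proof -
    have "inner (w 0) (w dl - w 0) \<in> \<int>" using gw dl(1) unfolding good_def by blast
    then show ?thesis unfolding m_def using dI dl(2) by simp
  qed
  have "fl \<alpha> m (w a0) * fl \<alpha> m (w b0) < 0"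
    using cs tr[of "(dl, inner p dl)"] im by simp
  then have neg: "fl \<alpha> m (w a0) * fl \<alpha> m a0 < 0" using wb0 by simp
  have "a0 \<in> {v. of_int c < inner v \<alpha> \<and> inner v \<alpha> < of_int c + 1}" using st1 a0 by blast
  then have x1: "of_int c < inner a0 \<alpha>" "inner a0 \<alpha> < of_int c + 1" by simp_all
  have "w a0 \<in> w ` A0" using a0 by (rule imageI)
  then have "w a0 \<in> {v. of_int c < inner v \<alpha> \<and> inner v \<alpha> < of_int c + 1}" using st2 by blast
  then have x2: "of_int c < inner (w a0) \<alpha>" "inner (w a0) \<alpha> < of_int c + 1" by simp_all
  obtain mi where mi: "m = of_int mi" using mI Ints_cases by blast
  have "(inner (w a0) \<alpha> - m) * (inner a0 \<alpha> - m) < 0" using neg by (simp add: fl_def)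
  then have "(0 < inner (w a0) \<alpha> - m \<and> inner a0 \<alpha> - m < 0) \<or> (inner (w a0) \<alpha> - m < 0 \<and> 0 < inner a0 \<alpha> - m)"
    unfolding mult_less_0_iff .
  then have "of_int c < m \<and> m < of_int c + 1" using x1 x2 by linarith
  then have "c < mi \<and> mi < c + 1" unfolding mi by linarith
  then show False by linarith
qed

end
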